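(* For every integer $n\geq 1$, $$2^n(1+x^2)\widehat{A}_n(x)=(1-x)^{n+1}P_n\!\left(\frac{1+x}{1-x}\right).$$
   Context: For a permutation $\pi=\pi(1)\pi(2)\cdots\pi(n)$ of $[n]=\{1,\ldots,n\}$, the number of alternating descents is ${\rm altdes}(\pi)=|\{2i: \pi(2i)<\pi(2i+1)\}\cup\{2i+1:\pi(2i+1)>\pi(2i+2)\}|$, where only indices $j\in\{1,\ldots,n-1\}$ are considered (so that $\pi(j+1)$ is defined). The alternating Eulerian polynomial is $\widehat{A}_n(x)=\sum_{\pi\in\mathfrak{S}_n}x^{{\rm altdes}(\pi)}$, where $\mathfrak{S}_n$ is the symmetric group on $[n]$. The derivative polynomials $P_n(x)$ (Hoffman) are defined by $P_n(\tan\theta)=\frac{d^n}{d\theta^n}\tan\theta$; equivalently $P_0(x)=x$ and $P_{n+1}(x)=(1+x^2)P_n'(x)$. *)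

theory Defs
  imports "HOL-Combinatorics.Permutations" "HOL-Computational_Algebra.Polynomial"
begin

definition altdes :: "nat \<Rightarrow> (nat \<Rightarrow> nat) \<Rightarrow> nat" where
  "altdes n \<pi> = card {j \<in> {1..<n}.
      (even j \<and> \<pi> j < \<pi> (Suc j)) \<or> (odd j \<and> \<pi> j > \<pi> (Suc j))}"

definition alt_eulerian :: "nat \<Rightarrow> real \<Rightarrow> real" where
  "alt_eulerian n x = (\<Sum>\<pi> \<in> {\<pi>. \<pi> permutes {1..n}}. x ^ altdes n \<pi>)"

fun deriv_poly :: "nat \<Rightarrow> real poly" where
  "deriv_poly 0 = [:0, 1:]"
| "deriv_poly (Suc n) = [:1, 0, 1:] * pderiv (deriv_poly n)"

end

theory Submission
  imports Defs "HOL-Combinatorics.Multiset_Permutations"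
begin

definition J :: "nat \<Rightarrow> nat \<Rightarrow> nat \<Rightarrow> nat" where
  "J q a b = (if (if even q then b < a else a < b) then 1 else 0)"

fun ad :: "nat \<Rightarrow> nat list \<Rightarrow> nat" where
  "ad q (a # b # xs) = J q a b + ad (Suc q) (b # xs)"
| "ad q _ = 0"

lemma J_le1: "J q a b \<le> 1" by (simp add: J_def)

lemma ad_sum: "ad q xs = (\<Sum>i<length xs - 1. J (q + i) (xs ! i) (xs ! Suc i))"
proof (induction q xs rule: ad.induct)
  case (1 q a b xs)
  have "(\<Sum>i<length (a # b # xs) - 1. J (q + i) ((a # b # xs) ! i) ((a # b # xs) ! Suc i))
     = J q a b + (\<Sum>i<length (b # xs) - 1. J (Suc q + i) ((b # xs) ! i) ((b # xs) ! Suc i))"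
    by (simp add: sum.lessThan_Suc_shift del: sum.lessThan_Suc)
  then show ?case using 1 by simp
qed auto

lemma ad_append: "ad q (ys @ zs) = ad q ys +
   (if ys = [] \<or> zs = [] then 0 else J (q + length ys - 1) (last ys) (hd zs)) + ad (q + length ys) zs"
proof (induction ys arbitrary: q)
  case Nil then show ?case by simp
next
  case (Cons a ys)
  show ?case
  proof (cases ys)
    case Nil then show ?thesis by (cases zs) auto
  next
    case (Cons b r)
    then show ?thesis using Cons.IH[of "Suc q"] by auto
  qed
qed

lemma ad_cons: "ad q (m # ws) = (if ws = [] then 0 else J q m (hd ws)) + ad (Suc q) ws"
  by (cases ws) auto

lemma ad_map_mono: "(\<And>a b. a \<in> set ws \<Longrightarrow> b \<in> set ws \<Longrightarrow> (h a < h b) = (a < b)) \<Longrightarrow> ad q (map h ws) = ad q ws"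
proof (induction q ws rule: ad.induct)
  case (1 q a b xs)
  then have "J q (h a) (h b) = J q a b" by (simp add: J_def)
  with 1 show ?case by simp
qed auto

lemma ad_map_anti: "(\<And>a b. a \<in> set ws \<Longrightarrow> b \<in> set ws \<Longrightarrow> (h a < h b) = (b < a)) \<Longrightarrow> ad q (map h ws) = ad (Suc q) ws"
proof (induction q ws rule: ad.induct)
  case (1 q a b xs)
  then have "J q (h a) (h b) = J (Suc q) a b" by (simp add: J_def)
  with 1 show ?case by simp
qed auto


abbreviation perms where "perms \<equiv> permutations_of_set"

lemma inj_map_perms: "inj_on h A \<Longrightarrow> inj_on (map h) (perms A)"
  by (rule inj_on_mapI) (auto simp: permutations_of_set_def intro: inj_on_subset)

lemma INS:
  assumes "finite V" "m \<notin> V"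
  shows "(\<Sum>zs\<in>perms (insert m V). F zs) =
    (\<Sum>U\<in>Pow V. \<Sum>ys\<in>perms U. \<Sum>ws\<in>perms (V - U). F (ys @ m # ws))"
proof -
  have fin: "finite (Pow V)" using assms by simp
  have "(\<Sum>U\<in>Pow V. \<Sum>ys\<in>perms U. \<Sum>ws\<in>perms (V - U). F (ys @ m # ws))
      = (\<Sum>U\<in>Pow V. \<Sum>p\<in>perms U \<times> perms (V - U). F (fst p @ m # snd p))"
    by (simp add: sum.cartesian_product case_prod_beta)
  also have "\<dots> = (\<Sum>(U,p)\<in>(SIGMA U:Pow V. perms U \<times> perms (V - U)). F (fst p @ m # snd p))"
    using fin by (subst sum.Sigma) auto
  also have "\<dots> = (\<Sum>zs\<in>perms (insert m V). F zs)"
  proof (rule sum.reindex_bij_witness[where j = "\<lambda>(U,p). fst p @ m # snd p"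
        and i = "\<lambda>zs. (set (takeWhile (\<lambda>z. z \<noteq> m) zs), takeWhile (\<lambda>z. z \<noteq> m) zs, tl (dropWhile (\<lambda>z. z \<noteq> m) zs))"])
    fix a assume a: "a \<in> (SIGMA U:Pow V. perms U \<times> perms (V - U))"
    then obtain U ys ws where e: "a = (U, ys, ws)" and U: "U \<subseteq> V" and ys: "ys \<in> perms U"
      and ws: "ws \<in> perms (V - U)" by auto
    have sy: "set ys = U" "distinct ys" using ys by (auto simp: permutations_of_set_def)
    have sw: "set ws = V - U" "distinct ws" using ws by (auto simp: permutations_of_set_def)
    have mn: "\<forall>z\<in>set ys. z \<noteq> m" using sy U assms by auto
    have tw: "takeWhile (\<lambda>z. z \<noteq> m) (ys @ m # ws) = ys" using mn by (simp add: takeWhile_append2)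
    have dw: "dropWhile (\<lambda>z. z \<noteq> m) (ys @ m # ws) = m # ws" using mn by (simp add: dropWhile_append2)
    show "(\<lambda>zs. (set (takeWhile (\<lambda>z. z \<noteq> m) zs), takeWhile (\<lambda>z. z \<noteq> m) zs, tl (dropWhile (\<lambda>z. z \<noteq> m) zs)))
        ((\<lambda>(U,p). fst p @ m # snd p) a) = a"
      using e tw dw sy by simp
    show "(\<lambda>(U,p). fst p @ m # snd p) a \<in> perms (insert m V)"
      using e sy sw U assms by (auto simp: permutations_of_set_def)
  next
    fix b assume b: "b \<in> perms (insert m V)"
    have sb: "set b = insert m V" "distinct b" using b by (auto simp: permutations_of_set_def)
    define ys where "ys = takeWhile (\<lambda>z. z \<noteq> m) b"
    define ws where "ws = tl (dropWhile (\<lambda>z. z \<noteq> m) b)"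
    have ne: "dropWhile (\<lambda>z. z \<noteq> m) b \<noteq> []" using sb by (auto simp: dropWhile_eq_Nil_conv)
    have hd: "hd (dropWhile (\<lambda>z. z \<noteq> m) b) = m" using hd_dropWhile[OF ne] by simp
    have "dropWhile (\<lambda>z. z \<noteq> m) b = m # ws" using ne hd unfolding ws_def by (cases "dropWhile (\<lambda>z. z \<noteq> m) b") auto
    then have bb: "b = ys @ m # ws" unfolding ys_def by (metis takeWhile_dropWhile_id)
    show "(\<lambda>(U,p). fst p @ m # snd p)
        ((\<lambda>zs. (set (takeWhile (\<lambda>z. z \<noteq> m) zs), takeWhile (\<lambda>z. z \<noteq> m) zs, tl (dropWhile (\<lambda>z. z \<noteq> m) zs))) b) = b"
      using bb unfolding ys_def ws_def by simp
    have d: "distinct (ys @ m # ws)" using sb bb by simp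
    have s: "set (ys @ m # ws) = insert m V" using sb bb by simp
    show "(\<lambda>zs. (set (takeWhile (\<lambda>z. z \<noteq> m) zs), takeWhile (\<lambda>z. z \<noteq> m) zs, tl (dropWhile (\<lambda>z. z \<noteq> m) zs))) b
       \<in> (SIGMA U:Pow V. perms U \<times> perms (V - U))"
      unfolding ys_def[symmetric] ws_def[symmetric]
      using d s assms(2) by (auto simp: permutations_of_set_def)
  next
    fix a assume "a \<in> (SIGMA U:Pow V. perms U \<times> perms (V - U))"
    show "F ((\<lambda>(U,p). fst p @ m # snd p) a) = (case a of (U, p) \<Rightarrow> F (fst p @ m # snd p))"
      by (simp add: case_prod_beta)
  qed
  finally show ?thesis ..
qed

lemma SPLITg:
  assumes "finite W" "g \<le> card W"
  shows "(\<Sum>zs\<in>perms W. F zs) =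
    (\<Sum>U\<in>{U. U \<subseteq> W \<and> card U = g}. \<Sum>ys\<in>perms U. \<Sum>ws\<in>perms (W - U). F (ys @ ws))"
proof -
  have fin: "finite {U. U \<subseteq> W \<and> card U = g}" using assms by simp
  have "(\<Sum>U\<in>{U. U \<subseteq> W \<and> card U = g}. \<Sum>ys\<in>perms U. \<Sum>ws\<in>perms (W - U). F (ys @ ws))
      = (\<Sum>U\<in>{U. U \<subseteq> W \<and> card U = g}. \<Sum>p\<in>perms U \<times> perms (W - U). F (fst p @ snd p))"
    by (simp add: sum.cartesian_product case_prod_beta)
  also have "\<dots> = (\<Sum>(U,p)\<in>(SIGMA U:{U. U \<subseteq> W \<and> card U = g}. perms U \<times> perms (W - U)). F (fst p @ snd p))"
    using fin by (subst sum.Sigma) auto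
  also have "\<dots> = (\<Sum>zs\<in>perms W. F zs)"
  proof (rule sum.reindex_bij_witness[where j = "\<lambda>(U,p). fst p @ snd p"
        and i = "\<lambda>zs. (set (take g zs), take g zs, drop g zs)"])
    fix a assume a: "a \<in> (SIGMA U:{U. U \<subseteq> W \<and> card U = g}. perms U \<times> perms (W - U))"
    then obtain U ys ws where e: "a = (U, ys, ws)" and U: "U \<subseteq> W" "card U = g" and ys: "ys \<in> perms U"
      and ws: "ws \<in> perms (W - U)" by auto
    have sy: "set ys = U" "distinct ys" using ys by (auto simp: permutations_of_set_def)
    have sw: "set ws = W - U" "distinct ws" using ws by (auto simp: permutations_of_set_def)
    have ly: "length ys = g" using sy U distinct_card by metis
    show "(\<lambda>zs. (set (take g zs), take g zs, drop g zs)) ((\<lambda>(U,p). fst p @ snd p) a) = a"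
      using e ly sy by simp
    show "(\<lambda>(U,p). fst p @ snd p) a \<in> perms W"
      using e sy sw U by (auto simp: permutations_of_set_def)
  next
    fix b assume b: "b \<in> perms W"
    have sb: "set b = W" "distinct b" using b by (auto simp: permutations_of_set_def)
    show "(\<lambda>(U,p). fst p @ snd p) ((\<lambda>zs. (set (take g zs), take g zs, drop g zs)) b) = b" by simp
    have lb: "length b = card W" using sb distinct_card by metis
    have d: "distinct (take g b @ drop g b)" using sb by simp
    have s: "set (take g b @ drop g b) = W" using sb by simp
    have ct: "card (set (take g b)) = g" using sb lb assms(2) by (simp add: distinct_card)
    have di: "set (take g b) \<inter> set (drop g b) = {}" using sb(2) by (simp add: set_take_disj_set_drop_if_distinct)
    have un: "set (take g b) \<union> set (drop g b) = W" by (metis set_append append_take_drop_id sb(1))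
    have "set (drop g b) = W - set (take g b)" using di un by blast
    then show "(\<lambda>zs. (set (take g zs), take g zs, drop g zs)) b
       \<in> (SIGMA U:{U. U \<subseteq> W \<and> card U = g}. perms U \<times> perms (W - U))"
      using d s ct sb by (auto simp: permutations_of_set_def dest: in_set_takeD)
  next
    fix a assume "a \<in> (SIGMA U:{U. U \<subseteq> W \<and> card U = g}. perms U \<times> perms (W - U))"
    show "F ((\<lambda>(U,p). fst p @ snd p) a) = (case a of (U, p) \<Rightarrow> F (fst p @ snd p))"
      by (simp add: case_prod_beta)
  qed
  finally show ?thesis ..
qed

lemma SPLIT:
  assumes "finite V"
  shows "(\<Sum>U\<in>Pow V. \<Sum>ys\<in>perms U. \<Sum>ws\<in>perms (V - U). H ys ws) =
         (\<Sum>xs\<in>perms V. \<Sum>g\<le>card V. H (take g xs) (drop g xs))"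
proof -
  have "(\<Sum>U\<in>Pow V. \<Sum>ys\<in>perms U. \<Sum>ws\<in>perms (V - U). H ys ws)
     = (\<Sum>g\<le>card V. \<Sum>U\<in>{U \<in> Pow V. card U = g}. \<Sum>ys\<in>perms U. \<Sum>ws\<in>perms (V - U). H ys ws)"
    using assms by (intro sum.group[symmetric]) (auto intro: card_mono)
  also have "\<dots> = (\<Sum>g\<le>card V. \<Sum>xs\<in>perms V. H (take g xs) (drop g xs))"
  proof (rule sum.cong[OF refl])
    fix g assume g: "g \<in> {..card V}"
    have "(\<Sum>xs\<in>perms V. H (take g xs) (drop g xs)) =
      (\<Sum>U\<in>{U. U \<subseteq> V \<and> card U = g}. \<Sum>ys\<in>perms U. \<Sum>ws\<in>perms (V - U). H (take g (ys @ ws)) (drop g (ys @ ws)))"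
      using g assms by (intro SPLITg) auto
    also have "\<dots> = (\<Sum>U\<in>{U \<in> Pow V. card U = g}. \<Sum>ys\<in>perms U. \<Sum>ws\<in>perms (V - U). H ys ws)"
    proof (rule sum.cong)
      fix U assume U: "U \<in> {U \<in> Pow V. card U = g}"
      show "(\<Sum>ys\<in>perms U. \<Sum>ws\<in>perms (V - U). H (take g (ys @ ws)) (drop g (ys @ ws))) =
            (\<Sum>ys\<in>perms U. \<Sum>ws\<in>perms (V - U). H ys ws)"
      proof -
        have "\<And>ys ws. ys \<in> perms U \<Longrightarrow> H (take g (ys @ ws)) (drop g (ys @ ws)) = H ys ws"
          using U by (simp add: length_finite_permutations_of_set)
        then show ?thesis by (auto intro!: sum.cong)
      qed
    qed auto
    finally show "(\<Sum>U\<in>{U \<in> Pow V. card U = g}. \<Sum>ys\<in>perms U. \<Sum>ws\<in>perms (V - U). H ys ws) =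
       (\<Sum>xs\<in>perms V. H (take g xs) (drop g xs))" ..
  qed
  also have "\<dots> = (\<Sum>xs\<in>perms V. \<Sum>g\<le>card V. H (take g xs) (drop g xs))"
    by (rule sum.swap)
  finally show ?thesis .
qed

lemma CARD:
  assumes "finite W"
  shows "(\<Sum>ws\<in>perms W. f (ad q ws)) = (\<Sum>ws\<in>perms {..<card W}. f (ad q ws))"
proof -
  define s where "s = sorted_list_of_set W"
  have ls: "length s = card W" unfolding s_def by simp
  have ss: "sorted_wrt (<) s" unfolding s_def by simp
  have setS: "set s = W" unfolding s_def using assms by simp
  have mono: "\<And>a b. a < length s \<Longrightarrow> b < length s \<Longrightarrow> (s ! a < s ! b) = (a < b)"
  proof -
    fix a b assume ab: "a < length s" "b < length s"
    show "(s ! a < s ! b) = (a < b)"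
      using ss ab by (metis linorder_neqE_nat not_less_iff_gr_or_eq sorted_wrt_nth_less)
  qed
  have inj: "inj_on ((!) s) {..<card W}"
    using mono ls unfolding inj_on_def by (metis lessThan_iff not_less_iff_gr_or_eq)
  have im: "(!) s ` {..<card W} = W" using ls setS by (metis atLeast_upt image_set map_nth set_map)
  have "perms W = map ((!) s) ` perms {..<card W}"
    using permutations_of_set_image_inj[OF inj] im by simp
  then have "(\<Sum>ws\<in>perms W. f (ad q ws)) = (\<Sum>ws\<in>perms {..<card W}. f (ad q (map ((!) s) ws)))"
    by (simp add: sum.reindex inj_map_perms[OF inj])
  also have "\<dots> = (\<Sum>ws\<in>perms {..<card W}. f (ad q ws))"
  proof (rule sum.cong[OF refl])
    fix ws assume "ws \<in> perms {..<card W}"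
    then have "set ws \<subseteq> {..<card W}" by (simp add: permutations_of_set_def)
    then show "f (ad q (map ((!) s) ws)) = f (ad q ws)"
      using mono ls by (subst ad_map_mono) auto
  qed
  finally show ?thesis .
qed

lemma PAL:
  assumes "finite W"
  shows "(\<Sum>ws\<in>perms W. f (ad (Suc q) ws)) = (\<Sum>ws\<in>perms W. f (ad q ws))"
proof -
  define k where "k = card W"
  define h where "h = (\<lambda>w::nat. k - 1 - w)"
  have inj: "inj_on h {..<k}" unfolding h_def inj_on_def by auto
  have im: "h ` {..<k} = {..<k}"
  proof
    show "h ` {..<k} \<subseteq> {..<k}" unfolding h_def by auto
    show "{..<k} \<subseteq> h ` {..<k}"
    proof
      fix w assume "w \<in> {..<k}"
      then have "w = h (k - 1 - w)" "k - 1 - w \<in> {..<k}" unfolding h_def by auto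
      then show "w \<in> h ` {..<k}" by blast
    qed
  qed
  have pe: "perms {..<k} = map h ` perms {..<k}"
    using permutations_of_set_image_inj[OF inj] im by simp
  have "(\<Sum>ws\<in>perms {..<k}. f (ad q ws)) = (\<Sum>ws\<in>perms {..<k}. f (ad q (map h ws)))"
    by (subst pe) (simp add: sum.reindex inj_map_perms[OF inj])
  also have "\<dots> = (\<Sum>ws\<in>perms {..<k}. f (ad (Suc q) ws))"
  proof (rule sum.cong[OF refl])
    fix ws assume "ws \<in> perms {..<k}"
    then have "set ws \<subseteq> {..<k}" by (simp add: permutations_of_set_def)
    then show "f (ad q (map h ws)) = f (ad (Suc q) ws)"
      unfolding h_def by (subst ad_map_anti) auto
  qed
  finally show ?thesis using CARD[OF assms] k_def by metis
qed


definition Al :: "nat \<Rightarrow> real \<Rightarrow> real" where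
  "Al n x = (\<Sum>xs\<in>perms {1..n}. x ^ ad 0 xs)"
definition Dl :: "nat \<Rightarrow> real \<Rightarrow> real" where
  "Dl n x = (\<Sum>xs\<in>perms {1..n}. real (ad 0 xs) * x ^ (ad 0 xs - 1))"

definition cc :: "real \<Rightarrow> bool \<Rightarrow> real" where
  "cc x b = (if b then 1 + x else 1 + x\<^sup>2)"

lemma INSPT:
  fixes x :: real
  assumes "set ys \<union> set ws \<subseteq> {1..n}" "\<not> (ys = [] \<and> ws = [])"
  shows "x ^ ad 0 (ys @ Suc n # ws) + x ^ ad 0 (ys @ 0 # ws)
       = x ^ (ad 0 ys + ad (Suc (length ys)) ws) * cc x (ys = [] \<or> ws = [])"
proof -
  define a where "a = ad 0 ys + ad (Suc (length ys)) ws"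
  have e: "ad 0 (ys @ m # ws) = a + (if ys = [] then 0 else J (length ys - 1) (last ys) m)
      + (if ws = [] then 0 else J (length ys) m (hd ws))" for m
    unfolding a_def by (simp add: ad_append ad_cons)
  have l: "ys \<noteq> [] \<Longrightarrow> 1 \<le> last ys \<and> last ys \<le> n" using assms(1) last_in_set by fastforce
  have h: "ws \<noteq> [] \<Longrightarrow> 1 \<le> hd ws \<and> hd ws \<le> n" using assms(1) hd_in_set by fastforce
  have l1: "ys \<noteq> [] \<Longrightarrow> J (length ys - 1) (last ys) (Suc n) = (if even (length ys - 1) then 0 else 1)"
    using l by (auto simp: J_def)
  have l2: "ys \<noteq> [] \<Longrightarrow> J (length ys - 1) (last ys) 0 = (if even (length ys - 1) then 1 else 0)"
    using l by (auto simp: J_def)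
  have h1: "ws \<noteq> [] \<Longrightarrow> J (length ys) (Suc n) (hd ws) = (if even (length ys) then 1 else 0)"
    using h by (auto simp: J_def)
  have h2: "ws \<noteq> [] \<Longrightarrow> J (length ys) 0 (hd ws) = (if even (length ys) then 0 else 1)"
    using h by (auto simp: J_def)
  show ?thesis
  proof (cases "ys = []")
    case True
    then have "ws \<noteq> []" using assms by auto
    then show ?thesis using True e h1 h2 by (simp add: a_def cc_def algebra_simps)
  next
    case F: False
    then have ev: "even (length ys - 1) \<longleftrightarrow> odd (length ys)" by (cases ys) auto
    show ?thesis
    proof (cases "ws = []")
      case True
      then show ?thesis using F e l1 l2 ev by (auto simp: a_def cc_def algebra_simps)
    next
      case False
      then show ?thesis using F e l1 l2 h1 h2 ev
        by (auto simp: a_def cc_def algebra_simps power_add power2_eq_square)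
    qed
  qed
qed

lemma GEN:
  fixes x :: real
  assumes "\<And>i. i < m \<Longrightarrow> j i \<le> 1"
  shows "(\<Sum>i<m. x ^ ((\<Sum>k<m. j k) - j i)) =
     real (\<Sum>k<m. j k) * x ^ ((\<Sum>k<m. j k) - 1) + (real m - real (\<Sum>k<m. j k)) * x ^ (\<Sum>k<m. j k)"
proof -
  define a where "a = (\<Sum>k<m. j k)"
  have pt: "x ^ (a - j i) = real (j i) * x ^ (a - 1) + (1 - real (j i)) * x ^ a" if i: "i < m" for i
  proof -
    have ji: "j i \<le> a" unfolding a_def using i by (intro member_le_sum) auto
    have "j i = 0 \<or> j i = 1" using assms[OF i] by auto
    then show ?thesis using ji by auto
  qed
  have "(\<Sum>i<m. x ^ (a - j i)) = (\<Sum>i<m. real (j i) * x ^ (a - 1) + (1 - real (j i)) * x ^ a)"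
    using pt by (intro sum.cong) auto
  also have "\<dots> = real a * x ^ (a - 1) + (real m - real a) * x ^ a"
    by (simp add: sum.distrib sum_distrib_right[symmetric] sum_subtractf a_def)
  finally show ?thesis unfolding a_def .
qed

lemma XSPT:
  fixes x :: real
  assumes "length xs = n" "n \<ge> 1"
  shows "(\<Sum>g\<le>n. x ^ (ad 0 (take g xs) + ad (length (take g xs)) (drop g xs)) * cc x (take g xs = [] \<or> drop g xs = []))
     = 2 * (1 + x) * x ^ ad 0 xs + (1 + x\<^sup>2) * (real (ad 0 xs) * x ^ (ad 0 xs - 1)
         + (real n - 1 - real (ad 0 xs)) * x ^ ad 0 xs)"
proof -
  obtain m where nm: "n = Suc m" using assms by (cases n) auto
  define f where "f g = x ^ (ad 0 (take g xs) + ad (length (take g xs)) (drop g xs)) * cc x (take g xs = [] \<or> drop g xs = [])" for g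
  define jj where "jj i = J i (xs ! i) (xs ! Suc i)" for i
  have ads: "ad 0 xs = (\<Sum>i<m. jj i)" using ad_sum[of 0 xs] assms nm by (simp add: jj_def)
  have fi: "f (Suc i) = x ^ (ad 0 xs - jj i) * (1 + x\<^sup>2)" if i: "i < m" for i
  proof -
    have tk: "take (Suc i) xs = take i xs @ [xs ! i]" using i assms nm by (simp add: take_Suc_conv_app_nth)
    have ne: "drop (Suc i) xs \<noteq> []" using i assms nm by simp
    have hd: "hd (drop (Suc i) xs) = xs ! Suc i" using i assms nm by (simp add: hd_drop_conv_nth)
    have "ad 0 xs = ad 0 (take (Suc i) xs @ drop (Suc i) xs)" by simp
    also have "\<dots> = ad 0 (take (Suc i) xs) + jj i + ad (Suc i) (drop (Suc i) xs)"
      apply (subst ad_append) using tk ne hd i assms nm by (simp add: jj_def)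
    finally have "ad 0 (take (Suc i) xs) + ad (Suc i) (drop (Suc i) xs) = ad 0 xs - jj i" by simp
    moreover have "length (take (Suc i) xs) = Suc i" using i assms nm by simp
    ultimately show ?thesis using tk ne by (simp add: f_def cc_def)
  qed
  have "(\<Sum>g\<le>n. f g) = f 0 + (\<Sum>i\<le>m. f (Suc i))"
    unfolding nm by (rule sum.atMost_Suc_shift)
  also have "(\<Sum>i\<le>m. f (Suc i)) = (\<Sum>i<m. f (Suc i)) + f n"
    by (simp add: nm lessThan_Suc_atMost[symmetric])
  also have "f 0 = (1 + x) * x ^ ad 0 xs" using assms by (simp add: f_def cc_def)
  also have "f n = (1 + x) * x ^ ad 0 xs" using assms by (simp add: f_def cc_def)
  also have "(\<Sum>i<m. f (Suc i)) = (1 + x\<^sup>2) * (\<Sum>i<m. x ^ (ad 0 xs - jj i))"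
    using fi by (simp add: sum_distrib_left mult.commute)
  also have "(\<Sum>i<m. x ^ (ad 0 xs - jj i)) = real (ad 0 xs) * x ^ (ad 0 xs - 1) + (real m - real (ad 0 xs)) * x ^ ad 0 xs"
    unfolding ads by (rule GEN) (simp add: jj_def J_def)
  finally show ?thesis unfolding f_def using nm by (simp add: algebra_simps)
qed


lemma REC:
  fixes x :: real
  assumes n: "n \<ge> 1"
  shows "2 * Al (Suc n) x = (2 * (1 + x) + (real n - 1) * (1 + x\<^sup>2)) * Al n x + (1 - x) * (1 + x\<^sup>2) * Dl n x"
proof -
  define V where "V = {1..n}"
  have fV: "finite V" and cV: "card V = n" and neV: "V \<noteq> {}" using n unfolding V_def by auto
  define H where "H ys ws = x ^ (ad 0 ys + ad (length ys) ws) * cc x (ys = [] \<or> ws = [])" for ys ws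
  have a1: "Al (Suc n) x = (\<Sum>zs\<in>perms (insert (Suc n) V). x ^ ad 0 zs)"
    unfolding Al_def V_def by (simp add: atLeastAtMostSuc_conv)
  have a2: "Al (Suc n) x = (\<Sum>zs\<in>perms (insert 0 V). x ^ ad 0 zs)"
  proof -
    have "insert 0 V = {0..n}" unfolding V_def by auto
    then have "(\<Sum>zs\<in>perms (insert 0 V). x ^ ad 0 zs) = (\<Sum>zs\<in>perms {..<Suc n}. x ^ ad 0 zs)"
      using CARD[of "insert 0 V" "\<lambda>k. x ^ k" 0] by simp
    moreover have "Al (Suc n) x = (\<Sum>zs\<in>perms {..<Suc n}. x ^ ad 0 zs)"
      unfolding Al_def using CARD[of "{1..Suc n}" "\<lambda>k. x ^ k" 0] by simp
    ultimately show ?thesis by simp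
  qed
  have "2 * Al (Suc n) x = (\<Sum>U\<in>Pow V. \<Sum>ys\<in>perms U. \<Sum>ws\<in>perms (V - U).
          x ^ ad 0 (ys @ Suc n # ws) + x ^ ad 0 (ys @ 0 # ws))"
  proof -
    have "2 * Al (Suc n) x = Al (Suc n) x + Al (Suc n) x" by simp
    also have "\<dots> = (\<Sum>U\<in>Pow V. \<Sum>ys\<in>perms U. \<Sum>ws\<in>perms (V - U). x ^ ad 0 (ys @ Suc n # ws))
        + (\<Sum>U\<in>Pow V. \<Sum>ys\<in>perms U. \<Sum>ws\<in>perms (V - U). x ^ ad 0 (ys @ 0 # ws))"
    proof -
      have "Suc n \<notin> V" "0 \<notin> V" unfolding V_def by auto
      then have b1: "Al (Suc n) x = (\<Sum>U\<in>Pow V. \<Sum>ys\<in>perms U. \<Sum>ws\<in>perms (V - U). x ^ ad 0 (ys @ Suc n # ws))"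
        and b2: "Al (Suc n) x = (\<Sum>U\<in>Pow V. \<Sum>ys\<in>perms U. \<Sum>ws\<in>perms (V - U). x ^ ad 0 (ys @ 0 # ws))"
        using a1 a2 INS[OF fV, of "Suc n" "\<lambda>zs. x ^ ad 0 zs"] INS[OF fV, of 0 "\<lambda>zs. x ^ ad 0 zs"] by simp_all
      show ?thesis using b1 b2 by linarith
    qed
    finally show ?thesis by (simp add: sum.distrib)
  qed
  also have "\<dots> = (\<Sum>U\<in>Pow V. \<Sum>ys\<in>perms U. \<Sum>ws\<in>perms (V - U).
          x ^ (ad 0 ys + ad (Suc (length ys)) ws) * cc x (ys = [] \<or> V - U = {}))"
  proof (intro sum.cong refl)
    fix U ys ws assume U: "U \<in> Pow V" and ys: "ys \<in> perms U" and ws: "ws \<in> perms (V - U)"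
    have s: "set ys = U" "set ws = V - U" using ys ws by (auto simp: permutations_of_set_def)
    have sub: "set ys \<union> set ws \<subseteq> {1..n}" using s U unfolding V_def by auto
    have ne: "\<not> (ys = [] \<and> ws = [])" using s U neV by auto
    have "(ws = []) = (V - U = {})" using s by (metis set_empty)
    then show "x ^ ad 0 (ys @ Suc n # ws) + x ^ ad 0 (ys @ 0 # ws) =
          x ^ (ad 0 ys + ad (Suc (length ys)) ws) * cc x (ys = [] \<or> V - U = {})"
      using INSPT[OF sub ne, of x] by simp
  qed
  also have "\<dots> = (\<Sum>U\<in>Pow V. \<Sum>ys\<in>perms U. \<Sum>ws\<in>perms (V - U).
          x ^ (ad 0 ys + ad (length ys) ws) * cc x (ys = [] \<or> V - U = {}))"
  proof (rule sum.cong[OF refl], rule sum.cong[OF refl])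
    fix U ys assume U: "U \<in> Pow V"
    show "(\<Sum>ws\<in>perms (V - U). x ^ (ad 0 ys + ad (Suc (length ys)) ws) * cc x (ys = [] \<or> V - U = {})) =
          (\<Sum>ws\<in>perms (V - U). x ^ (ad 0 ys + ad (length ys) ws) * cc x (ys = [] \<or> V - U = {}))"
      using PAL[of "V - U" "\<lambda>k. x ^ (ad 0 ys + k) * cc x (ys = [] \<or> V - U = {})" "length ys"] fV by simp
  qed
  also have "\<dots> = (\<Sum>U\<in>Pow V. \<Sum>ys\<in>perms U. \<Sum>ws\<in>perms (V - U). H ys ws)"
  proof (intro sum.cong refl)
    fix U ys ws assume U: "U \<in> Pow V" and ys: "ys \<in> perms U" and ws: "ws \<in> perms (V - U)"
    have "set ws = V - U" using ws by (auto simp: permutations_of_set_def)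
    then have "(ws = []) = (V - U = {})" by (metis set_empty)
    then show "x ^ (ad 0 ys + ad (length ys) ws) * cc x (ys = [] \<or> V - U = {}) = H ys ws"
      unfolding H_def by simp
  qed
  also have "\<dots> = (\<Sum>xs\<in>perms V. \<Sum>g\<le>n. H (take g xs) (drop g xs))"
    using SPLIT[OF fV] cV by simp
  also have "\<dots> = (\<Sum>xs\<in>perms V. 2 * (1 + x) * x ^ ad 0 xs + (1 + x\<^sup>2) * (real (ad 0 xs) * x ^ (ad 0 xs - 1)
         + (real n - 1 - real (ad 0 xs)) * x ^ ad 0 xs))"
  proof (rule sum.cong[OF refl])
    fix xs assume "xs \<in> perms V"
    then have "length xs = n" using cV by (simp add: length_finite_permutations_of_set)
    then show "(\<Sum>g\<le>n. H (take g xs) (drop g xs)) = 2 * (1 + x) * x ^ ad 0 xs + (1 + x\<^sup>2) * (real (ad 0 xs) * x ^ (ad 0 xs - 1)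
         + (real n - 1 - real (ad 0 xs)) * x ^ ad 0 xs)"
      unfolding H_def using XSPT[of xs n x] n by simp
  qed
  also have "\<dots> = (\<Sum>xs\<in>perms V. (2 * (1 + x) + (real n - 1) * (1 + x\<^sup>2)) * x ^ ad 0 xs
      + (1 - x) * (1 + x\<^sup>2) * (real (ad 0 xs) * x ^ (ad 0 xs - 1)))"
  proof (rule sum.cong[OF refl])
    fix xs
    show "2 * (1 + x) * x ^ ad 0 xs + (1 + x\<^sup>2) * (real (ad 0 xs) * x ^ (ad 0 xs - 1)
         + (real n - 1 - real (ad 0 xs)) * x ^ ad 0 xs) = (2 * (1 + x) + (real n - 1) * (1 + x\<^sup>2)) * x ^ ad 0 xs
      + (1 - x) * (1 + x\<^sup>2) * (real (ad 0 xs) * x ^ (ad 0 xs - 1))"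
    proof (cases "ad 0 xs")
      case 0 then show ?thesis by (simp add: algebra_simps)
    next
      case (Suc b) then show ?thesis by (simp add: algebra_simps)
    qed
  qed
  also have "\<dots> = (2 * (1 + x) + (real n - 1) * (1 + x\<^sup>2)) * Al n x + (1 - x) * (1 + x\<^sup>2) * Dl n x"
    unfolding Al_def Dl_def V_def by (simp add: sum.distrib sum_distrib_left)
  finally show ?thesis .
qed


lemma altdes_ad:
  assumes "\<pi> permutes {1..n}"
  shows "altdes n \<pi> = ad 0 (map \<pi> [1..<Suc n])"
proof -
  define Q where "Q j = ((even j \<and> \<pi> j < \<pi> (Suc j)) \<or> (odd j \<and> \<pi> j > \<pi> (Suc j)))" for j
  have "ad 0 (map \<pi> [1..<Suc n]) = (\<Sum>i<n - 1. J i (\<pi> (Suc i)) (\<pi> (Suc (Suc i))))"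
    by (subst ad_sum) (auto intro!: sum.cong simp del: upt_Suc)
  also have "\<dots> = (\<Sum>i<n - 1. if Q (Suc i) then 1 else 0)"
    by (intro sum.cong) (auto simp: J_def Q_def)
  also have "\<dots> = card {i \<in> {..<n - 1}. Q (Suc i)}"
    by (simp add: sum.inter_filter[symmetric])
  also have "\<dots> = card (Suc ` {i \<in> {..<n - 1}. Q (Suc i)})"
    by (simp add: card_image)
  also have "Suc ` {i \<in> {..<n - 1}. Q (Suc i)} = {j \<in> {1..<n}. Q j}"
  proof
    show "Suc ` {i \<in> {..<n - 1}. Q (Suc i)} \<subseteq> {j \<in> {1..<n}. Q j}" by auto
    show "{j \<in> {1..<n}. Q j} \<subseteq> Suc ` {i \<in> {..<n - 1}. Q (Suc i)}"
    proof
      fix j assume "j \<in> {j \<in> {1..<n}. Q j}"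
      then have "j = Suc (j - 1)" "j - 1 \<in> {i \<in> {..<n - 1}. Q (Suc i)}" by auto
      then show "j \<in> Suc ` {i \<in> {..<n - 1}. Q (Suc i)}" by (metis image_eqI)
    qed
  qed
  finally show ?thesis unfolding altdes_def Q_def by simp
qed

lemma alt_Al: "alt_eulerian n x = Al n x"
  unfolding alt_eulerian_def Al_def
proof (rule sum.reindex_bij_witness[where j = "\<lambda>\<pi>. map \<pi> [1..<Suc n]"
      and i = "\<lambda>xs k. if k \<in> {1..n} then xs ! (k - 1) else k"])
  fix \<pi> assume p: "\<pi> \<in> {\<pi>. \<pi> permutes {1..n}}"
  then have pp: "\<pi> permutes {1..n}" by simp
  show "(\<lambda>k. if k \<in> {1..n} then map \<pi> [1..<Suc n] ! (k - 1) else k) = \<pi>"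
  proof
    fix k show "(if k \<in> {1..n} then map \<pi> [1..<Suc n] ! (k - 1) else k) = \<pi> k"
      using permutes_not_in[OF pp, of k] by (auto simp del: upt_Suc)
  qed
  have su: "set [1..<Suc n] = {1..n}" by auto
  show "map \<pi> [1..<Suc n] \<in> perms {1..n}"
    unfolding permutations_of_set_def
    using permutes_image[OF pp] permutes_inj_on[OF pp] su
    by (simp add: distinct_map del: upt_Suc)
  show "x ^ ad 0 (map \<pi> [1..<Suc n]) = x ^ altdes n \<pi>" using altdes_ad[OF pp] by simp
next
  fix xs assume xs: "xs \<in> perms {1..n}"
  have sx: "set xs = {1..n}" "distinct xs" using xs by (auto simp: permutations_of_set_def)
  have lx: "length xs = n" using xs by (simp add: length_finite_permutations_of_set)
  define p where "p = (\<lambda>k. if k \<in> {1..n} then xs ! (k - 1) else k)"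
  show "map (\<lambda>k. if k \<in> {1..n} then xs ! (k - 1) else k) [1..<Suc n] = xs"
    by (rule nth_equalityI) (auto simp: lx simp del: upt_Suc)
  have inj: "inj_on p {1..n}"
    unfolding p_def inj_on_def using sx lx by (auto simp: nth_eq_iff_index_eq)
  have im: "p ` {1..n} = {1..n}"
  proof
    show "p ` {1..n} \<subseteq> {1..n}" unfolding p_def using sx lx nth_mem by fastforce
    show "{1..n} \<subseteq> p ` {1..n}"
    proof
      fix v assume "v \<in> {1..n}"
      then have "v \<in> set xs" using sx by simp
      then obtain t where t: "t < n" "xs ! t = v" using lx by (auto simp: in_set_conv_nth)
      then have "p (Suc t) = v" "Suc t \<in> {1..n}" unfolding p_def by auto
      then show "v \<in> p ` {1..n}" by (metis image_eqI)
    qed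
  qed
  have bij: "bij_betw p {1..n} {1..n}" using inj im by (simp add: bij_betw_def)
  have out: "\<And>k. k \<notin> {1..n} \<Longrightarrow> p k = k" unfolding p_def by presburger
  have "p permutes {1..n}" by (rule bij_imp_permutes[OF bij out])
  then show "(\<lambda>k. if k \<in> {1..n} then xs ! (k - 1) else k) \<in> {\<pi>. \<pi> permutes {1..n}}"
    unfolding p_def by simp
qed

lemma Al_deriv: "(Al n has_real_derivative Dl n x) (at x)"
  unfolding Al_def Dl_def
  by (rule DERIV_sum) (auto intro!: derivative_eq_intros)

definition QQ :: "nat \<Rightarrow> real \<Rightarrow> real" where
  "QQ n x = (1 - x) ^ Suc n * poly (deriv_poly n) ((1 + x) / (1 - x))"

lemma QQ_deriv:
  assumes "x \<noteq> 1"
  shows "(QQ n has_real_derivative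
     (- real (Suc n) * (1 - x) ^ n * poly (deriv_poly n) ((1 + x) / (1 - x))
      + (1 - x) ^ Suc n * (poly (pderiv (deriv_poly n)) ((1 + x) / (1 - x)) * (2 / (1 - x)^2)))) (at x)"
proof -
  have d1: "((\<lambda>x. (1 - x) ^ Suc n) has_real_derivative - real (Suc n) * (1 - x) ^ n) (at x)"
    by (auto intro!: derivative_eq_intros) (cases n; simp add: algebra_simps)
  have nz: "1 - x \<noteq> 0" using assms by simp
  have d2: "((\<lambda>x. (1 + x) / (1 - x)) has_real_derivative 2 / (1 - x)^2) (at x)"
    using nz by (auto intro!: derivative_eq_intros simp: field_simps power2_eq_square)
  have d3: "((\<lambda>x. poly (deriv_poly n) ((1 + x) / (1 - x))) has_real_derivative
      poly (pderiv (deriv_poly n)) ((1 + x) / (1 - x)) * (2 / (1 - x)^2)) (at x)"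
    by (rule DERIV_chain2[OF poly_DERIV d2])
  show ?thesis unfolding QQ_def by (rule DERIV_cong[OF DERIV_mult[OF d1 d3]]) (simp add: algebra_simps)
qed


lemma sq_id:
  fixes x :: real
  assumes x: "x \<noteq> 1"
  shows "(1 - x)^2 * (1 + ((1 + x) / (1 - x))^2) = 2 * (1 + x\<^sup>2)"
proof -
  have b: "1 - x \<noteq> 0" using x by simp
  have c: "(1 - x) * ((1 + x) / (1 - x)) = 1 + x" using b by simp
  have "(1 - x)^2 * (1 + ((1 + x) / (1 - x))^2) = (1 - x)^2 + ((1 - x) * ((1 + x) / (1 - x)))^2"
    by (simp only: power_mult_distrib distrib_left mult_1_right)
  also have "\<dots> = (1 - x)^2 + (1 + x)^2" using c by simp
  also have "\<dots> = 2 * (1 + x\<^sup>2)" by (simp add: power2_eq_square algebra_simps)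
  finally show ?thesis .
qed

lemma base: "x \<noteq> 1 \<Longrightarrow> 2 ^ 1 * (1 + x\<^sup>2) * Al 1 x = QQ 1 x"
proof -
  assume x: "x \<noteq> 1"
  have "Al 1 x = 1" unfolding Al_def by simp
  moreover have "QQ 1 x = (1 - x)^2 * (1 + ((1 + x) / (1 - x))^2)"
    unfolding QQ_def by (simp add: power2_eq_square pderiv_pCons)
  moreover have "(1 - x)^2 * (1 + ((1 + x) / (1 - x))^2) = 2 * (1 + x\<^sup>2)"
    using x by (rule sq_id)
  ultimately show ?thesis by simp
qed

lemma MAIN: "n \<ge> 1 \<Longrightarrow> x \<noteq> 1 \<Longrightarrow> 2 ^ n * (1 + x\<^sup>2) * Al n x = QQ n x"
proof (induction n arbitrary: x)
  case 0 then show ?case by simp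
next
  case (Suc m)
  show ?case
  proof (cases "m = 0")
    case True then show ?thesis using base Suc by simp
  next
    case False
    then have m: "m \<ge> 1" by simp
    have x: "x \<noteq> 1" by fact
    have E1: "2 ^ m * (1 + x\<^sup>2) * Al m x = QQ m x" using Suc.IH m x by simp
    define P where "P = poly (deriv_poly m) ((1 + x) / (1 - x))"
    define P' where "P' = poly (pderiv (deriv_poly m)) ((1 + x) / (1 - x))"
    define t where "t = (1 - x) ^ m"
    define K :: real where "K = 2 ^ m"
    have d1: "((\<lambda>z. 2 ^ m * (1 + z\<^sup>2) * Al m z) has_real_derivative
        2 ^ m * (2 * x * Al m x + (1 + x\<^sup>2) * Dl m x)) (at x)"
      by (rule DERIV_cong, (rule derivative_eq_intros Al_deriv refl)+) (simp add: algebra_simps)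
    have d1': "(QQ m has_real_derivative 2 ^ m * (2 * x * Al m x + (1 + x\<^sup>2) * Dl m x)) (at x)"
      by (rule has_field_derivative_transform_within_open[OF d1, of "{z. z \<noteq> 1}"])
         (use x Suc.IH m in \<open>auto intro: open_Collect_neq continuous_intros\<close>)
    have E2: "K * (2 * x * Al m x + (1 + x\<^sup>2) * Dl m x) =
        - real (Suc m) * t * P + (1 - x) * t * (P' * (2 / (1 - x)^2))"
      using DERIV_unique[OF d1' QQ_deriv[OF x]] unfolding K_def t_def P_def P'_def by simp
    have E1': "K * (1 + x\<^sup>2) * Al m x = (1 - x) * t * P" using E1 unfolding K_def t_def P_def QQ_def by simp
    have R: "2 * Al (Suc m) x = (2 * (1 + x) + (real m - 1) * (1 + x\<^sup>2)) * Al m x + (1 - x) * (1 + x\<^sup>2) * Dl m x"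
      using REC[OF m] .
    have "2 ^ Suc m * (1 + x\<^sup>2) * Al (Suc m) x = K * (1 + x\<^sup>2) * (2 * Al (Suc m) x)"
      unfolding K_def by simp
    also have "\<dots> = (real (Suc m) * (1 + x\<^sup>2)) * (K * (1 + x\<^sup>2) * Al m x)
        + (1 - x) * (1 + x\<^sup>2) * (K * (2 * x * Al m x + (1 + x\<^sup>2) * Dl m x))"
      unfolding R by (simp add: algebra_simps power2_eq_square)
    also have "\<dots> = (real (Suc m) * (1 + x\<^sup>2)) * ((1 - x) * t * P)
        + (1 - x) * (1 + x\<^sup>2) * (- real (Suc m) * t * P + (1 - x) * t * (P' * (2 / (1 - x)^2)))"
      unfolding E1' E2 ..
    also have "\<dots> = 2 * (1 + x\<^sup>2) * t * P'"
    proof -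
      define Z where "Z = P' * (2 / (1 - x)^2)"
      have nz: "(1 - x)^2 \<noteq> 0" using x by simp
      have q: "(1 - x) * (1 - x) = (1 - x)^2" by (simp add: power2_eq_square)
      have z: "(1 - x) * (1 - x) * Z = 2 * P'" unfolding Z_def q using nz by (simp add: field_simps)
      have "(real (Suc m) * (1 + x\<^sup>2)) * ((1 - x) * t * P)
        + (1 - x) * (1 + x\<^sup>2) * (- real (Suc m) * t * P + (1 - x) * t * Z) = (1 + x\<^sup>2) * t * ((1 - x) * (1 - x) * Z)"
        by (simp add: algebra_simps)
      then show ?thesis unfolding Z_def[symmetric] z by simp
    qed
    also have "\<dots> = QQ (Suc m) x"
    proof -
      have p1: "poly (deriv_poly (Suc m)) ((1 + x) / (1 - x)) = (1 + ((1 + x) / (1 - x))^2) * P'"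
      proof -
        have "\<And>y. poly (deriv_poly (Suc m)) y = (1 + y^2) * poly (pderiv (deriv_poly m)) y"
          by (simp add: power2_eq_square algebra_simps)
        then show ?thesis unfolding P'_def by blast
      qed
      have p2: "(1 - x) ^ Suc (Suc m) = (1 - x)^2 * t" unfolding t_def by (simp add: power2_eq_square)
      have "QQ (Suc m) x = (1 - x)^2 * t * (1 + ((1 + x) / (1 - x))^2) * P'"
        unfolding QQ_def p1 p2 by (simp only: mult.assoc)
      also have "\<dots> = 2 * (1 + x\<^sup>2) * t * P'"
        using sq_id[OF x] by simp
      finally show ?thesis by simp
    qed
    finally show ?thesis .
  qed
qed

theorem mainTheorem1:
  fixes n :: nat and x :: real
  assumes "n \<ge> 1" and "x \<noteq> 1"
  shows "2 ^ n * (1 + x\<^sup>2) * alt_eulerian n x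
         = (1 - x) ^ (n + 1) * poly (deriv_poly n) ((1 + x) / (1 - x))"
  using MAIN[OF assms] unfolding alt_Al QQ_def by simp

end
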